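(* Let $d\ge 3$ and let $S\subseteq\{0,1\}^d$ be the vertex set of a subcube of $Q_d$ of dimension $d'<d$ (i.e., all strings agreeing with a fixed string on a fixed set of $d-d'$ positions). Then the subgraph of $\mathit{CCC}_d$ induced by $\{[\ell,x] : \ell\in\{0,\dots,d-1\},\ x\in S\}$ is a convex subgraph of $\mathit{CCC}_d$.
   Context: Binary strings $x=x_0x_1\cdots x_{d-1}$ have positions $0,\dots,d-1$ from left to right; $x(i)$ denotes $x$ with the bit at position $i$ complemented. The cube-connected cycle $\mathit{CCC}_d$ ($d\ge 3$) has vertex set $\{[\ell,x]:\ell\in\{0,\dots,d-1\},\ x\in\{0,1\}^d\}$; $[\ell,x]$ and $[\ell',x']$ are adjacent iff either $x=x'$ and $\ell'\equiv \ell\pm 1\pmod d$, or $\ell=\ell'$ and $x'=x(\ell)$. $Q_d$ is the hypercube on $\{0,1\}^d$ (adjacency: differing in exactly one bit). A subgraph $H$ of $G$ is convex if every shortest path in $G$ between two vertices of $H$ lies in $H$. *)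

theory Defs
  imports Main
begin

definition flip_bit :: "bool list \<Rightarrow> nat \<Rightarrow> bool list" where
  "flip_bit x i = x[i := \<not> x ! i]"

definition is_walk :: "'v set \<Rightarrow> ('v \<Rightarrow> 'v \<Rightarrow> bool) \<Rightarrow> 'v list \<Rightarrow> bool" where
  "is_walk V E p \<longleftrightarrow> p \<noteq> [] \<and> set p \<subseteq> V \<and> (\<forall>i. Suc i < length p \<longrightarrow> E (p ! i) (p ! Suc i))"

definition is_shortest_path :: "'v set \<Rightarrow> ('v \<Rightarrow> 'v \<Rightarrow> bool) \<Rightarrow> 'v \<Rightarrow> 'v \<Rightarrow> 'v list \<Rightarrow> bool" where
  "is_shortest_path V E u v p \<longleftrightarrow>
     is_walk V E p \<and> hd p = u \<and> last p = v \<and>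
     (\<forall>q. is_walk V E q \<and> hd q = u \<and> last q = v \<longrightarrow> length p \<le> length q)"

text \<open>The subgraph induced by W is convex: every shortest path in G between two vertices
  of W lies in the induced subgraph, i.e. all its vertices are in W (its edges then
  automatically belong to the induced subgraph).\<close>

definition convex_induced :: "'v set \<Rightarrow> ('v \<Rightarrow> 'v \<Rightarrow> bool) \<Rightarrow> 'v set \<Rightarrow> bool" where
  "convex_induced V E W \<longleftrightarrow> W \<subseteq> V \<and>
     (\<forall>u\<in>W. \<forall>v\<in>W. \<forall>p. is_shortest_path V E u v p \<longrightarrow> set p \<subseteq> W)"

text \<open>Cube-connected cycle CCC_d: vertices [l,x] are pairs (l, x).\<close>

definition ccc_verts :: "nat \<Rightarrow> (nat \<times> bool list) set" where
  "ccc_verts d = {(l, x). l < d \<and> length x = d}"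

definition ccc_adj :: "nat \<Rightarrow> nat \<times> bool list \<Rightarrow> nat \<times> bool list \<Rightarrow> bool" where
  "ccc_adj d u v \<longleftrightarrow> u \<in> ccc_verts d \<and> v \<in> ccc_verts d \<and>
     ((snd u = snd v \<and> (fst v = (fst u + 1) mod d \<or> fst u = (fst v + 1) mod d)) \<or>
      (fst u = fst v \<and> snd v = flip_bit (snd u) (fst u)))"

definition subcube :: "nat \<Rightarrow> nat set \<Rightarrow> bool list \<Rightarrow> bool list set" where
  "subcube d F a = {x. length x = d \<and> (\<forall>i\<in>F. x ! i = a ! i)}"

end

theory Submission imports Defs begin

lemma walk_append:
  assumes "xs \<noteq> []" "ys \<noteq> []"
  shows "is_walk V E (xs @ ys) \<longleftrightarrow> is_walk V E xs \<and> is_walk V E ys \<and> E (last xs) (hd ys)"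
proof
  assume w: "is_walk V E (xs @ ys)"
  have a: "\<And>i. Suc i < length xs + length ys \<Longrightarrow> E ((xs@ys) ! i) ((xs@ys) ! Suc i)"
    using w unfolding is_walk_def by simp
  have "is_walk V E xs" unfolding is_walk_def
  proof (intro conjI allI impI)
    fix i assume "Suc i < length xs"
    then show "E (xs ! i) (xs ! Suc i)" using a[of i] by (simp add: nth_append)
  qed (use w assms in \<open>auto simp: is_walk_def\<close>)
  moreover have "is_walk V E ys" unfolding is_walk_def
  proof (intro conjI allI impI)
    fix i assume "Suc i < length ys"
    then show "E (ys ! i) (ys ! Suc i)" using a[of "length xs + i"] by (simp add: nth_append)
  qed (use w assms in \<open>auto simp: is_walk_def\<close>)
  moreover have "E (last xs) (hd ys)"
    using a[of "length xs - 1"] assms by (simp add: nth_append last_conv_nth hd_conv_nth)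
  ultimately show "is_walk V E xs \<and> is_walk V E ys \<and> E (last xs) (hd ys)" by blast
next
  assume h: "is_walk V E xs \<and> is_walk V E ys \<and> E (last xs) (hd ys)"
  show "is_walk V E (xs @ ys)" unfolding is_walk_def
  proof (intro conjI allI impI)
    fix i assume i: "Suc i < length (xs @ ys)"
    consider "Suc i < length xs" | "Suc i = length xs" | "Suc i > length xs" by linarith
    then show "E ((xs@ys) ! i) ((xs@ys) ! Suc i)"
    proof cases
      case 1 then show ?thesis using h by (simp add: nth_append is_walk_def)
    next
      case 2 then have "i = length xs - 1" by simp
      then show ?thesis using h assms 2 by (simp add: nth_append last_conv_nth hd_conv_nth)
    next
      case 3
      then obtain j where j: "i = length xs + j" by (metis less_Suc_eq_le le_Suc_ex)
      then show ?thesis using h i by (simp add: nth_append is_walk_def)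
    qed
  qed (use h in \<open>auto simp: is_walk_def\<close>)
qed

lemma walk_map:
  assumes "is_walk V E p" "\<And>w. w \<in> V \<Longrightarrow> \<tau> w \<in> V" "\<And>u v. E u v \<Longrightarrow> E (\<tau> u) (\<tau> v)"
  shows "is_walk V E (map \<tau> p)"
  using assms unfolding is_walk_def by auto

lemma walk_shortcut:
  assumes "is_walk V E (xs @ a # ys @ b # zs)" "is_walk V E ys'" "ys' \<noteq> []"
    "hd ys' = a" "last ys' = b"
  shows "is_walk V E (xs @ ys' @ zs)"
proof -
  have w1: "is_walk V E (xs @ [a])" and w2: "is_walk V E (b # zs)"
    using assms(1) walk_append[of "xs @ [a]" "ys @ b # zs" V E] walk_append[of "xs @ a # ys" "b # zs" V E]
    by auto
  have A: "is_walk V E (ys' @ zs)"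
  proof (cases "zs = []")
    case False
    have "E b (hd zs)" using w2 False walk_append[of "[b]" zs V E] by auto
    moreover have "is_walk V E zs" using w2 False walk_append[of "[b]" zs V E] by auto
    ultimately show ?thesis using walk_append[of ys' zs V E] assms False by auto
  qed (use assms in auto)
  show ?thesis
  proof (cases "xs = []")
    case False
    have "E (last xs) a" "is_walk V E xs" using w1 False walk_append[of xs "[a]" V E] by auto
    then show ?thesis using walk_append[of xs "ys' @ zs" V E] A assms False by auto
  qed (use A in auto)
qed

lemma flip_flip: "i < length x \<Longrightarrow> flip_bit (flip_bit x i) i = x"
  by (simp add: flip_bit_def)

lemma flip_comm: "flip_bit (flip_bit x j) i = flip_bit (flip_bit x i) j"
proof (cases "i = j")
  case False
  then show ?thesis unfolding flip_bit_def by (simp add: nth_list_update_neq list_update_swap)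
qed simp

lemma flip_nth: "i < length x \<Longrightarrow> flip_bit x j ! i = (if i = j then \<not> x ! i else x ! i)"
  by (simp add: flip_bit_def nth_list_update)

lemma tau_adj:
  "ccc_adj d u v \<Longrightarrow> ccc_adj d (fst u, flip_bit (snd u) i) (fst v, flip_bit (snd v) i)"
proof -
  assume h: "ccc_adj d u v"
  obtain l x where u: "u = (l, x)" by (cases u)
  obtain l' y where v: "v = (l', y)" by (cases v)
  have V: "l < d" "length x = d" "l' < d" "length y = d" using h u v by (auto simp: ccc_adj_def ccc_verts_def)
  have "(x = y \<and> (l' = (l + 1) mod d \<or> l = (l' + 1) mod d)) \<or> (l = l' \<and> y = flip_bit x l)"
    using h u v by (simp add: ccc_adj_def)
  then have "(flip_bit x i = flip_bit y i \<and> (l' = (l + 1) mod d \<or> l = (l' + 1) mod d)) \<or> (l = l' \<and> flip_bit y i = flip_bit (flip_bit x i) l)"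
    using flip_comm by metis
  moreover have "length (flip_bit x i) = d" "length (flip_bit y i) = d" using V by (auto simp: flip_bit_def)
  ultimately show ?thesis using u v V by (auto simp: ccc_adj_def ccc_verts_def)
qed

theorem lemma4p1:
  fixes d d' :: nat and F :: "nat set" and a :: "bool list"
  assumes "d \<ge> 3" and "d' < d"
    and "F \<subseteq> {..<d}" and "card F = d - d'" and "length a = d"
  shows "convex_induced (ccc_verts d) (ccc_adj d)
           {(l, x). l < d \<and> x \<in> subcube d F a}"
  unfolding convex_induced_def
proof (intro conjI ballI allI impI)
  let ?W = "{(l, x). l < d \<and> x \<in> subcube d F a}"
  let ?V = "ccc_verts d"
  let ?E = "ccc_adj d"
  show "?W \<subseteq> ?V" by (auto simp: subcube_def ccc_verts_def)
  fix u v p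
  assume uW: "u \<in> ?W" and vW: "v \<in> ?W" and sp: "is_shortest_path ?V ?E u v p"
  have pw: "is_walk ?V ?E p" and hp: "hd p = u" and lp: "last p = v"
    and minl: "\<And>q. is_walk ?V ?E q \<Longrightarrow> hd q = u \<Longrightarrow> last q = v \<Longrightarrow> length p \<le> length q"
    using sp unfolding is_shortest_path_def by auto
  show "set p \<subseteq> ?W"
  proof (rule ccontr)
    assume "\<not> set p \<subseteq> ?W"
    then obtain w where w: "w \<in> set p" "w \<notin> ?W" by blast
    have wV: "w \<in> ?V" using w pw unfolding is_walk_def by auto
    have "\<not> (\<forall>i\<in>F. snd w ! i = a ! i)"
      using w(2) wV by (cases w) (auto simp: ccc_verts_def subcube_def)
    then obtain i where iF: "i \<in> F" and wi: "snd w ! i \<noteq> a ! i" by blast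
    have id: "i < d" using iF assms(3) by auto
    define P where "P = (\<lambda>w::nat \<times> bool list. snd w ! i \<noteq> a ! i)"
    have nPu: "\<not> P u" and nPv: "\<not> P v" using uW vW iF by (auto simp: P_def subcube_def)
    have "\<exists>x\<in>set p. P x" using w wi P_def by auto
    then obtain xs1 c zs1 where p1: "p = xs1 @ c # zs1" and Pc: "P c"
      and nP1: "\<forall>y\<in>set xs1. \<not> P y"
      using split_list_first_prop[of p P] by blast
    have "xs1 \<noteq> []" using p1 hp nPu Pc by auto
    then obtain xs a' where xs1: "xs1 = xs @ [a']" by (metis rev_exhaust)
    have "\<exists>x\<in>set (c # zs1). P x" using Pc by auto
    then obtain ys0 e zs2 where p2: "c # zs1 = ys0 @ e # zs2" and Pe: "P e"
      and nP2: "\<forall>z\<in>set zs2. \<not> P z"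
      using split_list_last_prop[of "c # zs1" P] by blast
    have "zs2 \<noteq> []"
    proof
      assume "zs2 = []"
      then have "last p = e" using p1 p2 by (metis last_ConsR last_append last_snoc list.distinct(1))
      then show False using lp nPv Pe by simp
    qed
    then obtain b' zs where zs2: "zs2 = b' # zs" by (cases zs2) auto
    define ys where "ys = ys0 @ [e]"
    have pdec: "p = xs @ a' # ys @ b' # zs" using p1 xs1 p2 zs2 ys_def by simp
    have ysne: "ys \<noteq> []" using ys_def by simp
    have hys: "hd ys = c" using p2 ys_def by (cases ys0) auto
    have lys: "last ys = e" using ys_def by simp
    have na': "\<not> P a'" using nP1 xs1 by auto
    have nb': "\<not> P b'" using nP2 zs2 by auto
    have E1: "?E a' c" and E2: "?E e b'"
    proof -
      have "is_walk ?V ?E ((xs @ [a']) @ (ys @ b' # zs))" using pw pdec by simp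
      then have "?E (last (xs @ [a'])) (hd (ys @ b' # zs))"
        using walk_append[of "xs@[a']" "ys @ b' # zs" ?V ?E] ysne by simp
      then show "?E a' c" using hys ysne by simp
      have "is_walk ?V ?E ((xs @ a' # ys) @ (b' # zs))" using pw pdec by simp
      then have "?E (last (xs @ a' # ys)) (hd (b' # zs))"
        using walk_append[of "xs @ a' # ys" "b' # zs" ?V ?E] by simp
      then show "?E e b'" using lys ysne by simp
    qed
    define \<tau> where "\<tau> = (\<lambda>w::nat \<times> bool list. (fst w, flip_bit (snd w) i))"
    have a'V: "length (snd a') = d" "length (snd c) = d" 
    proof -
      have "a' \<in> ?V" "c \<in> ?V" using E1 unfolding ccc_adj_def by blast+
      then show "length (snd a') = d" "length (snd c) = d"
        by (cases a', simp add: ccc_verts_def, cases c, simp add: ccc_verts_def)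
    qed
    have e'V: "length (snd e) = d" "length (snd b') = d" 
    proof -
      have "e \<in> ?V" "b' \<in> ?V" using E2 unfolding ccc_adj_def by blast+
      then show "length (snd e) = d" "length (snd b') = d"
        by (cases e, simp add: ccc_verts_def, cases b', simp add: ccc_verts_def)
    qed
    have ta: "\<tau> c = a'"
    proof -
      have ne: "snd a' \<noteq> snd c" using na' Pc P_def by auto
      then have "fst a' = fst c" "snd c = flip_bit (snd a') (fst a')" using E1 by (auto simp: ccc_adj_def)
      moreover have "fst a' = i"
        using na' Pc a'V id calculation by (auto simp: P_def flip_nth split: if_splits)
      ultimately show ?thesis using a'V id by (simp add: \<tau>_def flip_flip prod_eq_iff)
    qed
    have tb: "\<tau> e = b'"
    proof -
      have ne: "snd e \<noteq> snd b'" using nb' Pe P_def by auto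
      then have "fst e = fst b'" "snd b' = flip_bit (snd e) (fst e)" using E2 by (auto simp: ccc_adj_def)
      moreover have "fst e = i"
        using nb' Pe e'V id calculation by (auto simp: P_def flip_nth split: if_splits)
      ultimately show ?thesis using e'V id by (simp add: \<tau>_def prod_eq_iff)
    qed
    have ysw: "is_walk ?V ?E ys"
    proof -
      have "is_walk ?V ?E ((xs @ [a']) @ (ys @ b' # zs))" using pw pdec by simp
      then have "is_walk ?V ?E (ys @ b' # zs)" using walk_append[of "xs@[a']" "ys @ b' # zs" ?V ?E] ysne by simp
      then show ?thesis using walk_append[of ys "b' # zs" ?V ?E] ysne by simp
    qed
    have mysw: "is_walk ?V ?E (map \<tau> ys)"
    proof (rule walk_map[OF ysw])
      fix w assume "w \<in> ?V" then show "\<tau> w \<in> ?V" by (auto simp: \<tau>_def ccc_verts_def flip_bit_def)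
    next
      fix u v assume "?E u v" then show "?E (\<tau> u) (\<tau> v)" unfolding \<tau>_def by (rule tau_adj)
    qed
    define q where "q = xs @ map \<tau> ys @ zs"
    have qw: "is_walk ?V ?E q" unfolding q_def
      by (rule walk_shortcut[OF pw[unfolded pdec] mysw]) (use ysne ta tb hys lys in \<open>auto simp: hd_map last_map\<close>)
    have hq: "hd q = u" using hp pdec ysne ta hys by (cases xs) (auto simp: q_def hd_map)
    have lq: "last q = v" using lp pdec ysne tb lys by (cases zs) (auto simp: q_def last_map)
    have "length q < length p" using pdec q_def by simp
    then show False using minl[OF qw hq lq] by simp
  qed
qed

end
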